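(* For every $n\ge2$, every $\omega\in[0,1)$, every $l\in[1,n)$, every $r\in(l,n]$ (integers) and every $t\in\mathbb R$, $$\|[\tau_t^n(c_l),a_r^*]\|\ge\big|(e^{-2iH_n(\omega)t})_{l,r}\big|.$$
   Context: Setting: $V_j=\lambda\chi_{[1-\phi^{-1},1)}(j\phi^{-1}+\omega\bmod1)$, $\lambda>0$, $\phi=\frac{1+\sqrt5}2$; $\mathcal H_n=\bigotimes_{j=1}^n\mathbb C^2$; $H_n^{XY}=-\sum_{j=1}^{n-1}(\sigma^x_j\sigma^x_{j+1}+\sigma^y_j\sigma^y_{j+1})+\sum_{j=1}^nV_j\sigma^z_j$; $\tau_t^n(A)=e^{itH_n^{XY}}Ae^{-itH_n^{XY}}$. $a_j=\frac12(\sigma^x_j-i\sigma^y_j)$, $a_j^*$ its adjoint; $c_1=a_1$, $c_j=\sigma^z_1\cdots\sigma^z_{j-1}a_j$. $H_n(\omega)$ is the $n\times n$ real symmetric tridiagonal matrix with diagonal entries $V_1,\dots,V_n$ and all off-diagonal entries (on the first super- and sub-diagonals) equal to $1$; $(M)_{l,r}$ denotes the $(l,r)$ matrix entry. *)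

theory Defs
  imports "HOL-Analysis.Analysis" "Jordan_Normal_Form.Schur_Decomposition"
begin

definition golden :: real where "golden = (1 + sqrt 5) / 2"

definition fib_pot :: "real \<Rightarrow> real \<Rightarrow> nat \<Rightarrow> real" where
  "fib_pot lam \<omega> j =
     lam * (if frac (real j / golden + \<omega>) \<in> {1 - 1 / golden ..< 1} then 1 else 0)"

text \<open>Kronecker (tensor) product of matrices; with this convention
  kron A B corresponds to A \<otimes> B (first factor most significant).\<close>
definition kron :: "'a :: times mat \<Rightarrow> 'a mat \<Rightarrow> 'a mat" where
  "kron A B = mat (dim_row A * dim_row B) (dim_col A * dim_col B)
     (\<lambda>(i, j). A $$ (i div dim_row B, j div dim_col B) * B $$ (i mod dim_row B, j mod dim_col B))"

definition pauli_x :: "complex mat" where "pauli_x = mat_of_rows_list 2 [[0, 1], [1, 0]]"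
definition pauli_y :: "complex mat" where "pauli_y = mat_of_rows_list 2 [[0, - \<i>], [\<i>, 0]]"
definition pauli_z :: "complex mat" where "pauli_z = mat_of_rows_list 2 [[1, 0], [0, -1]]"

definition site_op :: "nat \<Rightarrow> nat \<Rightarrow> complex mat \<Rightarrow> complex mat" where
  "site_op n j M = kron (kron (1\<^sub>m (2 ^ (j - 1))) M) (1\<^sub>m (2 ^ (n - j)))"

definition sx :: "nat \<Rightarrow> nat \<Rightarrow> complex mat" where "sx n j = site_op n j pauli_x"
definition sy :: "nat \<Rightarrow> nat \<Rightarrow> complex mat" where "sy n j = site_op n j pauli_y"
definition sz :: "nat \<Rightarrow> nat \<Rightarrow> complex mat" where "sz n j = site_op n j pauli_z"

definition msum :: "nat \<Rightarrow> (nat \<Rightarrow> complex mat) \<Rightarrow> nat list \<Rightarrow> complex mat" where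
  "msum d f xs = foldr (\<lambda>k acc. f k + acc) xs (0\<^sub>m d d)"

definition H_XY :: "real \<Rightarrow> real \<Rightarrow> nat \<Rightarrow> complex mat" where
  "H_XY lam \<omega> n =
     - msum (2 ^ n) (\<lambda>j. sx n j * sx n (j + 1) + sy n j * sy n (j + 1)) [1..<n]
     + msum (2 ^ n) (\<lambda>j. complex_of_real (fib_pot lam \<omega> j) \<cdot>\<^sub>m sz n j) [1..<n + 1]"

definition mexp :: "complex mat \<Rightarrow> complex mat" where
  "mexp A = mat (dim_row A) (dim_row A) (\<lambda>(i, j). \<Sum>k. (A ^\<^sub>m k) $$ (i, j) / of_nat (fact k))"

definition tau :: "real \<Rightarrow> real \<Rightarrow> nat \<Rightarrow> real \<Rightarrow> complex mat \<Rightarrow> complex mat" where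
  "tau lam \<omega> n t A =
     mexp ((\<i> * complex_of_real t) \<cdot>\<^sub>m H_XY lam \<omega> n) * A
     * mexp ((- \<i> * complex_of_real t) \<cdot>\<^sub>m H_XY lam \<omega> n)"

definition a_op :: "nat \<Rightarrow> nat \<Rightarrow> complex mat" where
  "a_op n j = (1 / 2 :: complex) \<cdot>\<^sub>m (sx n j - \<i> \<cdot>\<^sub>m sy n j)"

definition c_op :: "nat \<Rightarrow> nat \<Rightarrow> complex mat" where
  "c_op n j = foldr (\<lambda>k acc. sz n k * acc) [1..<j] (a_op n j)"

definition commutator :: "complex mat \<Rightarrow> complex mat \<Rightarrow> complex mat" where
  "commutator A B = A * B - B * A"

definition vnorm :: "complex vec \<Rightarrow> real" where
  "vnorm v = sqrt (\<Sum>i<dim_vec v. (cmod (v $ i))\<^sup>2)"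

definition opnorm :: "complex mat \<Rightarrow> real" where
  "opnorm A = Sup {vnorm (A *\<^sub>v v) | v. v \<in> carrier_vec (dim_col A) \<and> vnorm v \<le> 1}"

text \<open>The one-particle Hamiltonian H_n(omega): n x n tridiagonal, diagonal V_1..V_n,
  off-diagonals 1 (stored 0-indexed).\<close>
definition H_one :: "real \<Rightarrow> real \<Rightarrow> nat \<Rightarrow> complex mat" where
  "H_one lam \<omega> n = mat n n (\<lambda>(i, j).
     if i = j then complex_of_real (fib_pot lam \<omega> (i + 1))
     else if i = j + 1 \<or> j = i + 1 then 1 else 0)"

end

theory Submission
  imports Defs
begin

lemma kron_carrier: "kron A B \<in> carrier_mat (dim_row A * dim_row B) (dim_col A * dim_col B)"
  unfolding kron_def by auto

lemma kron_index: assumes "i < dim_row A * dim_row B" "j < dim_col A * dim_col B"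
  shows "kron A B $$ (i,j) = A $$ (i div dim_row B, j div dim_col B) * B $$ (i mod dim_row B, j mod dim_col B)"
  using assms unfolding kron_def by auto

lemma L1: "(x::nat) div 2^(Suc a) = y div 2^(Suc a) \<longleftrightarrow> (\<forall>k. bit x (Suc a + k) = bit y (Suc a + k))"
proof -
  have "x div 2^(Suc a) = y div 2^(Suc a) \<longleftrightarrow> drop_bit (Suc a) x = drop_bit (Suc a) y"
    by (simp only: drop_bit_eq_div)
  also have "\<dots> \<longleftrightarrow> (\<forall>k. bit (drop_bit (Suc a) x) k = bit (drop_bit (Suc a) y) k)"
    by (auto intro: bit_eqI)
  also have "\<dots> \<longleftrightarrow> (\<forall>k. bit x (Suc a + k) = bit y (Suc a + k))"
    by (simp only: bit_drop_bit_eq comp_apply)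
  finally show ?thesis .
qed

lemma L2: "(x::nat) mod 2^a = y mod 2^a \<longleftrightarrow> (\<forall>k<a. bit x k = bit y k)"
proof -
  have "x mod 2^a = y mod 2^a \<longleftrightarrow> take_bit a x = take_bit a y"
    by (simp only: take_bit_eq_mod)
  also have "\<dots> \<longleftrightarrow> (\<forall>k. bit (take_bit a x) k = bit (take_bit a y) k)"
    by (auto intro: bit_eqI)
  also have "\<dots> \<longleftrightarrow> (\<forall>k<a. bit x k = bit y k)"
    by (auto simp only: bit_take_bit_iff)
  finally show ?thesis .
qed

lemma bits_other_eq:
  fixes x y a :: nat
  shows "(x div 2^(Suc a) = y div 2^(Suc a) \<and> x mod 2^a = y mod 2^a) \<longleftrightarrow> (\<forall>k. k \<noteq> a \<longrightarrow> bit x k = bit y k)"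
proof -
  have 1: "x div 2^(Suc a) = y div 2^(Suc a) \<longleftrightarrow> (\<forall>k. bit x (Suc a + k) = bit y (Suc a + k))"
    by (rule L1)
  have 2: "x mod 2^a = y mod 2^a \<longleftrightarrow> (\<forall>k<a. bit x k = bit y k)"
    by (rule L2)
  have 3: "(\<forall>k. bit x (Suc a + k) = bit y (Suc a + k)) \<and> (\<forall>k<a. bit x k = bit y k) \<longleftrightarrow> (\<forall>k. k \<noteq> a \<longrightarrow> bit x k = bit y k)"
  proof
    assume h: "(\<forall>k. bit x (Suc a + k) = bit y (Suc a + k)) \<and> (\<forall>k<a. bit x k = bit y k)"
    show "\<forall>k. k \<noteq> a \<longrightarrow> bit x k = bit y k"
    proof (intro allI impI)
      fix k assume "k \<noteq> a"
      then consider "k < a" | "Suc a \<le> k" by linarith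
      then show "bit x k = bit y k"
      proof cases
        case 1 then show ?thesis using h by blast
      next
        case 2 then have "k = Suc a + (k - Suc a)" by simp
        then show ?thesis using h by metis
      qed
    qed
  next
    assume "\<forall>k. k \<noteq> a \<longrightarrow> bit x k = bit y k"
    then show "(\<forall>k. bit x (Suc a + k) = bit y (Suc a + k)) \<and> (\<forall>k<a. bit x k = bit y k)" by auto
  qed
  show ?thesis unfolding 1 2 3 ..
qed

lemma bit_mod2: "(x::nat) div 2^a mod 2 = of_bool (bit x a)"
  by (simp add: bit_iff_odd odd_iff_mod_2_eq_one)

lemma pow_split: assumes "1 \<le> j" "j \<le> n" shows "2^(j-1) * 2 * 2^(n-j) = (2::nat)^n"
proof -
  have "2^(j-1) * 2 = (2::nat)^j" using assms by (cases j) auto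
  moreover have "(2::nat)^j * 2^(n-j) = 2^n" using assms by (simp add: power_add[symmetric])
  ultimately show ?thesis by simp
qed

lemma site_op_carrier: assumes "1 \<le> j" "j \<le> n" "M \<in> carrier_mat 2 2"
  shows "site_op n j M \<in> carrier_mat (2^n) (2^n)"
proof -
  have "2^(j-1) * 2 * 2^(n-j) = (2::nat)^n"
    by (rule pow_split[OF assms(1,2)])
  then show ?thesis using assms unfolding site_op_def kron_def by auto
qed

lemma site_op_index:
  assumes "1 \<le> j" "j \<le> n" "M \<in> carrier_mat 2 2" "x < 2^n" "y < 2^n"
  shows "site_op n j M $$ (x,y) = (if \<forall>k. k \<noteq> n - j \<longrightarrow> bit x k = bit y k
      then M $$ (of_bool (bit x (n-j)), of_bool (bit y (n-j))) else 0)"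
proof -
  define a where "a = n - j"
  have N: "(2::nat)^n = 2^(j-1) * 2 * 2^a"
    using pow_split[OF assms(1,2)] unfolding a_def by simp
  have xd: "x div 2^a < 2^(j-1) * 2" "y div 2^a < 2^(j-1) * 2"
    using assms N by (simp_all add: less_mult_imp_div_less)
  have xdd: "x div 2^a div 2 < 2^(j-1)" "y div 2^a div 2 < 2^(j-1)"
    using xd by (simp_all add: less_mult_imp_div_less)
  have m: "x div 2^a mod 2 < 2" "y div 2^a mod 2 < 2" by auto
  have "site_op n j M $$ (x,y) = (kron (1\<^sub>m (2 ^ (j - 1))) M) $$ (x div 2^a, y div 2^a) *
        (1\<^sub>m (2^a)) $$ (x mod 2^a, y mod 2^a)"
    unfolding site_op_def a_def[symmetric]
    using assms N by (subst kron_index) (auto simp: kron_def)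
  also have "\<dots> = (if x div 2^a div 2 = y div 2^a div 2 then 1 else 0) * M $$ (x div 2^a mod 2, y div 2^a mod 2) *
        (if x mod 2^a = y mod 2^a then 1 else 0)"
    using assms xd xdd m by (subst kron_index) auto
  also have "\<dots> = (if x div 2^a div 2 = y div 2^a div 2 \<and> x mod 2^a = y mod 2^a
      then M $$ (x div 2^a mod 2, y div 2^a mod 2) else 0)" by simp
  also have "\<dots> = (if \<forall>k. k \<noteq> a \<longrightarrow> bit x k = bit y k
      then M $$ (of_bool (bit x a), of_bool (bit y a)) else 0)"
  proof -
    have "x div 2^(Suc a) = x div 2^a div 2" "y div 2^(Suc a) = y div 2^a div 2"
      by (simp_all only: power_Suc2 div_mult2_eq)
    then have e: "(x div 2^a div 2 = y div 2^a div 2 \<and> x mod 2^a = y mod 2^a) \<longleftrightarrow> (\<forall>k. k \<noteq> a \<longrightarrow> bit x k = bit y k)"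
      using bits_other_eq[of x a y] by simp
    show ?thesis unfolding e bit_mod2 ..
  qed
  finally show ?thesis unfolding a_def .
qed

lemma A1: "(x::nat) < 2^n \<longleftrightarrow> take_bit n x = x" by (rule take_bit_nat_eq_self_iff[symmetric])
lemma A2: "take_bit n (x::nat) = x \<longleftrightarrow> (\<forall>k. bit (take_bit n x) k = bit x k)" by (auto intro: bit_eqI)
lemma A3: "(\<forall>k. bit (take_bit n (x::nat)) k = bit x k) \<longleftrightarrow> (\<forall>k. n \<le> k \<longrightarrow> \<not> bit x k)" 
  by (auto simp only: bit_take_bit_iff not_le[symmetric])
lemma less_pow2_bits: "(x::nat) < 2^n \<longleftrightarrow> (\<forall>k. n \<le> k \<longrightarrow> \<not> bit x k)"
  unfolding A1 A2 A3 ..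

lemma flip_less: assumes "(x::nat) < 2^n" "a < n" shows "flip_bit a x < 2^n"
  unfolding less_pow2_bits
proof (intro allI impI)
  fix k assume "n \<le> k"
  then have "\<not> bit x k" "a \<noteq> k" using assms less_pow2_bits by auto
  then show "\<not> bit (flip_bit a x) k" by (simp add: bit_flip_bit_iff)
qed

lemma all_split: "(\<forall>k. P k) \<longleftrightarrow> (\<forall>k. k \<noteq> a \<longrightarrow> P k) \<and> P a" by auto

lemma eq_flip_iff: "(y::nat) = flip_bit a x \<longleftrightarrow> (\<forall>k. k \<noteq> a \<longrightarrow> bit x k = bit y k) \<and> (bit y a \<longleftrightarrow> \<not> bit x a)"
proof -
  have "y = flip_bit a x \<longleftrightarrow> (\<forall>k. bit y k \<longleftrightarrow> bit (flip_bit a x) k)" by (auto intro: bit_eqI)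
  also have "\<dots> \<longleftrightarrow> (\<forall>k. bit y k \<longleftrightarrow> ((a = k) \<longleftrightarrow> \<not> bit x k))" by (simp add: bit_flip_bit_iff)
  also have "\<dots> \<longleftrightarrow> (\<forall>k. k \<noteq> a \<longrightarrow> (bit y k \<longleftrightarrow> ((a = k) \<longleftrightarrow> \<not> bit x k))) \<and> (bit y a \<longleftrightarrow> ((a = a) \<longleftrightarrow> \<not> bit x a))"
    by (rule all_split)
  also have "\<dots> \<longleftrightarrow> (\<forall>k. k \<noteq> a \<longrightarrow> bit x k = bit y k) \<and> (bit y a \<longleftrightarrow> \<not> bit x a)" by auto
  finally show ?thesis .
qed

lemma eq_iff_bits: "(y::nat) = x \<longleftrightarrow> (\<forall>k. k \<noteq> a \<longrightarrow> bit x k = bit y k) \<and> (bit y a \<longleftrightarrow> bit x a)"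
proof -
  have "y = x \<longleftrightarrow> (\<forall>k. bit y k \<longleftrightarrow> bit x k)" by (auto intro: bit_eqI)
  also have "\<dots> \<longleftrightarrow> (\<forall>k. k \<noteq> a \<longrightarrow> (bit y k \<longleftrightarrow> bit x k)) \<and> (bit y a \<longleftrightarrow> bit x a)"
    by (rule all_split)
  also have "\<dots> \<longleftrightarrow> (\<forall>k. k \<noteq> a \<longrightarrow> bit x k = bit y k) \<and> (bit y a \<longleftrightarrow> bit x a)" by auto
  finally show ?thesis .
qed
lemma pauli_carrier: "pauli_x \<in> carrier_mat 2 2" "pauli_y \<in> carrier_mat 2 2" "pauli_z \<in> carrier_mat 2 2"
  by (auto simp: pauli_x_def pauli_y_def pauli_z_def mat_of_rows_list_def)

lemma pauli_x_idx: "pauli_x $$ (of_bool b, of_bool c) = (if b \<noteq> c then 1 else 0)"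
  by (cases b; cases c) (auto simp: pauli_x_def mat_of_rows_list_def)
lemma pauli_y_idx: "pauli_y $$ (of_bool b, of_bool c) = (if b \<noteq> c then (if b then \<i> else - \<i>) else 0)"
  by (cases b; cases c) (auto simp: pauli_y_def mat_of_rows_list_def)
lemma pauli_z_idx: "pauli_z $$ (of_bool b, of_bool c) = (if b = c then (if b then -1 else 1) else 0)"
  by (cases b; cases c) (auto simp: pauli_z_def mat_of_rows_list_def)

lemma sx_carrier: "1 \<le> j \<Longrightarrow> j \<le> n \<Longrightarrow> sx n j \<in> carrier_mat (2^n) (2^n)"
  unfolding sx_def by (rule site_op_carrier) (auto simp: pauli_carrier)
lemma sy_carrier: "1 \<le> j \<Longrightarrow> j \<le> n \<Longrightarrow> sy n j \<in> carrier_mat (2^n) (2^n)"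
  unfolding sy_def by (rule site_op_carrier) (auto simp: pauli_carrier)
lemma sz_carrier: "1 \<le> j \<Longrightarrow> j \<le> n \<Longrightarrow> sz n j \<in> carrier_mat (2^n) (2^n)"
  unfolding sz_def by (rule site_op_carrier) (auto simp: pauli_carrier)

lemma sx_idx: assumes "1 \<le> j" "j \<le> n" "x < 2^n" "y < 2^n"
  shows "sx n j $$ (x,y) = (if y = flip_bit (n-j) x then 1 else 0)"
  unfolding sx_def using assms
  by (subst site_op_index) (auto simp only: pauli_carrier pauli_x_idx eq_flip_iff[of y], auto)

lemma sy_idx: assumes "1 \<le> j" "j \<le> n" "x < 2^n" "y < 2^n"
  shows "sy n j $$ (x,y) = (if y = flip_bit (n-j) x then (if bit x (n-j) then \<i> else - \<i>) else 0)"
  unfolding sy_def using assms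
  by (subst site_op_index) (auto simp only: pauli_carrier pauli_y_idx eq_flip_iff[of y], auto)

lemma sz_idx: assumes "1 \<le> j" "j \<le> n" "x < 2^n" "y < 2^n"
  shows "sz n j $$ (x,y) = (if y = x then (if bit x (n-j) then -1 else 1) else 0)"
  unfolding sz_def using assms
  by (subst site_op_index) (auto simp only: pauli_carrier pauli_z_idx eq_iff_bits[of y x "n-j"], auto)

lemma mult_idx: assumes "A \<in> carrier_mat N N" "B \<in> carrier_mat N N" "x < N" "y < N"
  shows "(A * B) $$ (x,y) = (\<Sum>z<N. A $$ (x,z) * B $$ (z,y))"
  using assms by (auto simp: index_mult_mat scalar_prod_def lessThan_atLeast0 intro!: sum.cong)

lemma mult_idx_collapse: assumes "A \<in> carrier_mat N N" "B \<in> carrier_mat N N" "x < N" "y < N" "c < N"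
  and "\<And>z. z < N \<Longrightarrow> A $$ (x,z) = (if z = c then \<alpha> else 0)"
  shows "(A * B) $$ (x,y) = \<alpha> * B $$ (c,y)"
proof -
  have "(A * B) $$ (x,y) = (\<Sum>z<N. A $$ (x,z) * B $$ (z,y))" by (rule mult_idx[OF assms(1-4)])
  also have "\<dots> = (\<Sum>z<N. (if z = c then \<alpha> * B $$ (c,y) else 0))"
    using assms(6) by (intro sum.cong) auto
  also have "\<dots> = \<alpha> * B $$ (c,y)" using assms(5) by simp
  finally show ?thesis .
qed

definition hop :: "nat \<Rightarrow> nat \<Rightarrow> complex mat" where
  "hop n j = sx n j * sx n (j + 1) + sy n j * sy n (j + 1)"

lemma hop_carrier: "1 \<le> m \<Longrightarrow> m + 1 \<le> n \<Longrightarrow> hop n m \<in> carrier_mat (2^n) (2^n)"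
  unfolding hop_def using sx_carrier sy_carrier by (meson add_carrier_mat mult_carrier_mat le_add1 le_trans order.trans add_leE)

lemma hop_idx: assumes "1 \<le> m" "m + 1 \<le> n" "x < 2^n" "y < 2^n"
  shows "hop n m $$ (x,y) = (if bit x (n-m) \<noteq> bit x (n - Suc m) \<and> y = flip_bit (n - Suc m) (flip_bit (n-m) x) then 2 else 0)"
proof -
  let ?c = "flip_bit (n-m) x"
  have c: "?c < 2^n" using assms by (intro flip_less) auto
  have cx: "sx n m \<in> carrier_mat (2^n) (2^n)" "sx n (m+1) \<in> carrier_mat (2^n) (2^n)"
    "sy n m \<in> carrier_mat (2^n) (2^n)" "sy n (m+1) \<in> carrier_mat (2^n) (2^n)"
    using assms by (auto intro!: sx_carrier sy_carrier)
  have e1: "(sx n m * sx n (m+1)) $$ (x,y) = 1 * sx n (m+1) $$ (?c, y)"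
    by (rule mult_idx_collapse[OF cx(1,2) assms(3,4) c]) (use assms in \<open>auto simp: sx_idx\<close>)
  have e2: "(sy n m * sy n (m+1)) $$ (x,y) = (if bit x (n-m) then \<i> else - \<i>) * sy n (m+1) $$ (?c, y)"
    by (rule mult_idx_collapse[OF cx(3,4) assms(3,4) c]) (use assms in \<open>auto simp: sy_idx\<close>)
  have nm: "n - (m+1) = n - Suc m" "n - Suc m \<noteq> n - m" using assms by auto
  have bc: "bit ?c (n - Suc m) = bit x (n - Suc m)" using nm by (auto simp: bit_flip_bit_iff)
  have h: "hop n m $$ (x,y) = (sx n m * sx n (m+1)) $$ (x,y) + (sy n m * sy n (m+1)) $$ (x,y)"
    unfolding hop_def using cx assms by (subst index_add_mat) auto
  have s1: "sx n (m+1) $$ (?c,y) = (if y = flip_bit (n - Suc m) ?c then 1 else 0)"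
    using sx_idx[of "m+1" n ?c y] assms c nm by simp
  have s2: "sy n (m+1) $$ (?c,y) = (if y = flip_bit (n - Suc m) ?c then (if bit x (n - Suc m) then \<i> else - \<i>) else 0)"
    using sy_idx[of "m+1" n ?c y] assms c nm bc by simp
  show ?thesis
    unfolding h e1 e2 s1 s2 by auto
qed

lemma msum_carrier: assumes "\<And>k. k \<in> set xs \<Longrightarrow> f k \<in> carrier_mat d d"
  shows "msum d f xs \<in> carrier_mat d d"
  using assms
proof (induction xs)
  case Nil then show ?case by (simp add: msum_def)
next
  case (Cons a xs) then show ?case by (simp add: msum_def)
qed

lemma msum_idx': assumes "\<And>k. k \<in> set xs \<Longrightarrow> f k \<in> carrier_mat d d" "x < d" "y < d"
  shows "msum d f xs $$ (x,y) = sum_list (map (\<lambda>k. f k $$ (x,y)) xs)"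
  using assms
proof (induction xs)
  case Nil then show ?case by (simp add: msum_def)
next
  case (Cons a xs)
  have c: "msum d f xs \<in> carrier_mat d d" using Cons by (auto intro: msum_carrier)
  have e: "msum d f (a # xs) = f a + msum d f xs" by (simp add: msum_def)
  show ?case using Cons c by (simp add: e)
qed

abbreviation V where "V lam \<omega> j \<equiv> complex_of_real (fib_pot lam \<omega> j)"

lemma H_parts_carrier:
  "msum (2 ^ n) (\<lambda>j. sx n j * sx n (j + 1) + sy n j * sy n (j + 1)) [1..<n] \<in> carrier_mat (2^n) (2^n)"
  "msum (2 ^ n) (\<lambda>j. V lam \<omega> j \<cdot>\<^sub>m sz n j) [1..<n + 1] \<in> carrier_mat (2^n) (2^n)"
  by (rule msum_carrier; use hop_carrier[unfolded hop_def] in auto;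
      fail)+
    (rule msum_carrier; use sz_carrier in auto)

lemma H_carrier: "H_XY lam \<omega> n \<in> carrier_mat (2^n) (2^n)"
  unfolding H_XY_def using H_parts_carrier by auto

lemma H_idx: assumes "x < 2^n" "y < 2^n"
  shows "H_XY lam \<omega> n $$ (x,y) = - (\<Sum>m\<in>{1..<n}. hop n m $$ (x,y)) + (\<Sum>m\<in>{1..<n+1}. V lam \<omega> m * sz n m $$ (x,y))"
proof -
  have 1: "msum (2 ^ n) (\<lambda>j. sx n j * sx n (j + 1) + sy n j * sy n (j + 1)) [1..<n] $$ (x,y)
     = (\<Sum>m\<in>{1..<n}. hop n m $$ (x,y))"
  proof -
    have f: "(\<lambda>j. sx n j * sx n (j + 1) + sy n j * sy n (j + 1)) = hop n" by (rule ext) (simp add: hop_def)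
    show ?thesis unfolding f
      using assms by (subst msum_idx') (auto simp: hop_carrier sum_set_upt_conv_sum_list_nat[symmetric])
  qed
  have 2: "msum (2 ^ n) (\<lambda>j. V lam \<omega> j \<cdot>\<^sub>m sz n j) [1..<n + 1] $$ (x,y)
     = (\<Sum>m\<in>{1..<n+1}. V lam \<omega> m * sz n m $$ (x,y))"
  proof -
    have "msum (2 ^ n) (\<lambda>j. V lam \<omega> j \<cdot>\<^sub>m sz n j) [1..<n + 1] $$ (x,y)
       = sum_list (map (\<lambda>k. (V lam \<omega> k \<cdot>\<^sub>m sz n k) $$ (x,y)) [1..<n+1])"
      using assms sz_carrier by (subst msum_idx') auto
    also have "\<dots> = (\<Sum>k\<in>{1..<n+1}. (V lam \<omega> k \<cdot>\<^sub>m sz n k) $$ (x,y))"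
      by (simp only: sum_set_upt_conv_sum_list_nat[symmetric] set_upt)
    also have "\<dots> = (\<Sum>m\<in>{1..<n+1}. V lam \<omega> m * sz n m $$ (x, y))"
    proof (rule sum.cong)
      fix k assume "k \<in> {1..<n+1}"
      then have "sz n k \<in> carrier_mat (2^n) (2^n)" by (intro sz_carrier) auto
      then show "(V lam \<omega> k \<cdot>\<^sub>m sz n k) $$ (x,y) = V lam \<omega> k * sz n k $$ (x, y)"
        using assms by simp
    qed simp
    finally show ?thesis .
  qed
  define P where "P = msum (2 ^ n) (\<lambda>j. sx n j * sx n (j + 1) + sy n j * sy n (j + 1)) [1..<n]"
  define Q where "Q = msum (2 ^ n) (\<lambda>j. V lam \<omega> j \<cdot>\<^sub>m sz n j) [1..<n + 1]"
  have cP: "P \<in> carrier_mat (2^n) (2^n)" and cQ: "Q \<in> carrier_mat (2^n) (2^n)"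
    unfolding P_def Q_def by (rule H_parts_carrier)+
  have "H_XY lam \<omega> n = - P + Q" unfolding H_XY_def P_def Q_def ..
  then have "H_XY lam \<omega> n $$ (x,y) = - (P $$ (x,y)) + Q $$ (x,y)"
    using cP cQ assms by simp
  then show ?thesis unfolding P_def Q_def 1 2 .
qed

definition vac :: "nat \<Rightarrow> nat" where "vac n = 2^n - 1"
definition wv :: "nat \<Rightarrow> nat \<Rightarrow> nat" where "wv n j = unset_bit (n - Suc j) (2^n - 1)"

lemma bit_vac: "bit (vac n) k \<longleftrightarrow> k < n"
  unfolding vac_def mask_eq_exp_minus_1[symmetric] by (simp add: bit_mask_iff)

lemma bit_wv: "bit (wv n j) k \<longleftrightarrow> k < n \<and> k \<noteq> n - Suc j"
  unfolding wv_def mask_eq_exp_minus_1[symmetric] by (auto simp add: bit_mask_iff bit_unset_bit_iff)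

lemma vac_less: "vac n < 2^n" unfolding less_pow2_bits by (simp add: bit_vac)
lemma wv_less: "wv n j < 2^n" unfolding less_pow2_bits by (simp add: bit_wv)

lemma wv_eq_iff: assumes "j < n" "k < n" shows "wv n j = wv n k \<longleftrightarrow> j = k"
proof
  assume "wv n j = wv n k"
  then have "bit (wv n j) (n - Suc j) = bit (wv n k) (n - Suc j)" by simp
  then have "n - Suc j = n - Suc k" using assms by (auto simp: bit_wv)
  then show "j = k" using assms by auto
qed simp

lemma wv_ne_vac: "j < n \<Longrightarrow> wv n j \<noteq> vac n"
proof
  assume "j < n" "wv n j = vac n"
  then have "bit (wv n j) (n - Suc j) = bit (vac n) (n - Suc j)" by simp
  then show False using \<open>j < n\<close> by (auto simp: bit_wv bit_vac)
qed

abbreviation Sv where "Sv lam \<omega> n \<equiv> (\<Sum>m\<in>{1..<n+1}. V lam \<omega> m)"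

lemma hop_vac: assumes "1 \<le> m" "m + 1 \<le> n" "y < 2^n"
  shows "hop n m $$ (vac n, y) = 0"
  using assms by (subst hop_idx) (auto simp: vac_less bit_vac)

lemma sz_vac: assumes "1 \<le> m" "m \<le> n" "y < 2^n"
  shows "sz n m $$ (vac n, y) = (if y = vac n then -1 else 0)"
  using assms by (subst sz_idx) (auto simp: vac_less bit_vac)

lemma H_vac: assumes "y < 2^n"
  shows "H_XY lam \<omega> n $$ (vac n, y) = (if y = vac n then - Sv lam \<omega> n else 0)"
proof -
  have "H_XY lam \<omega> n $$ (vac n, y) = - (\<Sum>m\<in>{1..<n}. hop n m $$ (vac n,y)) + (\<Sum>m\<in>{1..<n+1}. V lam \<omega> m * sz n m $$ (vac n,y))"
    using assms by (rule H_idx[OF vac_less])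
  also have "\<dots> = (\<Sum>m\<in>{1..<n+1}. V lam \<omega> m * (if y = vac n then -1 else 0))"
    using assms by (simp add: hop_vac sz_vac)
  also have "\<dots> = (if y = vac n then - Sv lam \<omega> n else 0)"
    by (simp add: sum_negf)
  finally show ?thesis .
qed

lemma sum_if_eq: "finite A \<Longrightarrow> (\<Sum>m\<in>A. if m = c \<and> P then f else 0) = (if c \<in> A \<and> P then f else 0)"
proof -
  assume "finite A"
  have "(\<Sum>m\<in>A. if m = c \<and> P then f else 0) = (\<Sum>m\<in>A. if m = c then (if P then f else 0) else 0)"
    by (rule sum.cong) auto
  also have "\<dots> = (if c \<in> A \<and> P then f else 0)" using \<open>finite A\<close> by simp
  finally show ?thesis .
qed

lemma hop_wv: assumes "1 \<le> m" "m + 1 \<le> n" "y < 2^n" "j < n"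
  shows "hop n m $$ (wv n j, y) = (if m = Suc j \<and> y = wv n (Suc j) then 2 else 0) + (if m = j \<and> y = wv n (j - 1) then 2 else 0)"
proof -
  have h: "hop n m $$ (wv n j, y) = (if bit (wv n j) (n-m) \<noteq> bit (wv n j) (n - Suc m) \<and> y = flip_bit (n - Suc m) (flip_bit (n-m) (wv n j)) then 2 else 0)"
    using assms by (intro hop_idx) (auto simp: wv_less)
  consider "m = Suc j" | "m = j" | "m \<noteq> Suc j" "m \<noteq> j" by blast
  then show ?thesis
  proof cases
    case 1
    have f: "flip_bit (n - Suc m) (flip_bit (n-m) (wv n j)) = wv n (Suc j)"
      using assms 1 by (intro bit_eqI) (auto simp: bit_flip_bit_iff bit_wv)
    show ?thesis unfolding h f using assms 1 by (auto simp: bit_wv)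
  next
    case 2
    have f: "flip_bit (n - Suc m) (flip_bit (n-m) (wv n j)) = wv n (j - 1)"
      using assms 2 by (intro bit_eqI) (auto simp: bit_flip_bit_iff bit_wv)
    show ?thesis unfolding h f using assms 2 by (auto simp: bit_wv)
  next
    case 3
    then have "bit (wv n j) (n-m) = bit (wv n j) (n - Suc m)" using assms by (auto simp: bit_wv)
    then show ?thesis unfolding h using 3 by auto
  qed
qed

lemma sz_wv: assumes "1 \<le> m" "m \<le> n" "y < 2^n" "j < n"
  shows "sz n m $$ (wv n j, y) = (if y = wv n j then (if m = Suc j then 1 else -1) else 0)"
  using assms by (subst sz_idx) (auto simp: wv_less bit_wv)

lemma H_wv_raw: assumes "y < 2^n" "j < n"
  shows "H_XY lam \<omega> n $$ (wv n j, y) =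
     - ((if Suc j < n \<and> y = wv n (Suc j) then 2 else 0) + (if 1 \<le> j \<and> y = wv n (j - 1) then 2 else 0))
     + (if y = wv n j then 2 * V lam \<omega> (Suc j) - Sv lam \<omega> n else 0)"
proof -
  have "H_XY lam \<omega> n $$ (wv n j, y) = - (\<Sum>m\<in>{1..<n}. hop n m $$ (wv n j,y)) + (\<Sum>m\<in>{1..<n+1}. V lam \<omega> m * sz n m $$ (wv n j,y))"
    using assms by (intro H_idx wv_less)
  also have "(\<Sum>m\<in>{1..<n}. hop n m $$ (wv n j,y)) = (\<Sum>m\<in>{1..<n}. (if m = Suc j \<and> y = wv n (Suc j) then 2 else 0) + (if m = j \<and> y = wv n (j - 1) then 2 else 0))"
    using assms by (intro sum.cong) (auto simp: hop_wv)
  also have "\<dots> = (if Suc j < n \<and> y = wv n (Suc j) then 2 else 0) + (if 1 \<le> j \<and> y = wv n (j - 1) then 2 else 0)"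
    unfolding sum.distrib using assms by (simp add: sum_if_eq)
  also have "(\<Sum>m\<in>{1..<n+1}. V lam \<omega> m * sz n m $$ (wv n j,y)) = (\<Sum>m\<in>{1..<n+1}. if y = wv n j then 2 * (if m = Suc j then V lam \<omega> m else 0) - V lam \<omega> m else 0)"
    using assms by (intro sum.cong) (auto simp: sz_wv)
  also have "\<dots> = (if y = wv n j then 2 * V lam \<omega> (Suc j) - Sv lam \<omega> n else 0)"
    using assms by (simp add: sum_subtractf sum_distrib_left[symmetric])
  finally show ?thesis .
qed

definition B0 :: "real \<Rightarrow> real \<Rightarrow> nat \<Rightarrow> complex mat" where
  "B0 lam \<omega> n = mat n n (\<lambda>(j,k). if j = k then 2 * V lam \<omega> (Suc j) - Sv lam \<omega> n
     else if j = Suc k \<or> k = Suc j then -2 else 0)"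

lemma H_wv: assumes "y < 2^n" "j < n"
  shows "H_XY lam \<omega> n $$ (wv n j, y) = (\<Sum>k<n. if y = wv n k then B0 lam \<omega> n $$ (j,k) else 0)"
proof (cases "\<exists>k<n. y = wv n k")
  case True
  then obtain k where k: "k < n" "y = wv n k" by blast
  have "(\<Sum>k'<n. if y = wv n k' then B0 lam \<omega> n $$ (j,k') else 0) = (\<Sum>k'<n. if k' = k then B0 lam \<omega> n $$ (j,k) else 0)"
    using k wv_eq_iff by (intro sum.cong) auto
  also have "\<dots> = B0 lam \<omega> n $$ (j,k)" using k by simp
  finally have r: "(\<Sum>k'<n. if y = wv n k' then B0 lam \<omega> n $$ (j,k') else 0) = B0 lam \<omega> n $$ (j,k)" .
  have e1: "Suc j < n \<and> y = wv n (Suc j) \<longleftrightarrow> k = Suc j" using k assms wv_eq_iff by auto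
  have e2: "1 \<le> j \<and> y = wv n (j - 1) \<longleftrightarrow> k = j - 1 \<and> 1 \<le> j" using k assms wv_eq_iff by auto
  have e3: "y = wv n j \<longleftrightarrow> k = j" using k assms wv_eq_iff by auto
  show ?thesis unfolding H_wv_raw[OF assms] r e1 e2 e3 using k assms
    by (auto simp: B0_def)
next
  case False
  then have r: "(\<Sum>k'<n. if y = wv n k' then B0 lam \<omega> n $$ (j,k') else 0) = 0" by simp
  have "Suc j < n \<longrightarrow> y \<noteq> wv n (Suc j)" "1 \<le> j \<longrightarrow> y \<noteq> wv n (j - 1)" "y \<noteq> wv n j"
    using False assms by auto
  then show ?thesis unfolding H_wv_raw[OF assms] r by auto
qed

lemma pow_row_eigen: assumes A: "(A :: complex mat) \<in> carrier_mat N N" and a: "a < N"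
  and row: "\<And>y. y < N \<Longrightarrow> A $$ (a,y) = (if y = a then ev else 0)"
  shows "y < N \<Longrightarrow> (A ^\<^sub>m k) $$ (a,y) = (if y = a then ev^k else 0)"
proof (induction k arbitrary: y)
  case 0 then show ?case using A a by auto
next
  case (Suc k)
  have "(A ^\<^sub>m Suc k) $$ (a,y) = (A ^\<^sub>m k * A) $$ (a,y)" by simp
  also have "\<dots> = ev^k * A $$ (a,y)"
    by (rule mult_idx_collapse[of _ N]) (use A a Suc in auto)
  finally show ?case using row[OF Suc.prems] by (auto simp: mult.commute)
qed

lemma mexp_idx: assumes "A \<in> carrier_mat N N" "i < N" "j < N"
  shows "mexp A $$ (i,j) = (\<Sum>k. (A ^\<^sub>m k) $$ (i,j) / of_nat (fact k))"
  using assms unfolding mexp_def by auto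

lemma mexp_carrier: "A \<in> carrier_mat N N \<Longrightarrow> mexp A \<in> carrier_mat N N"
  unfolding mexp_def by auto

lemma exp_series: "(\<lambda>k. (z::complex)^k / of_nat (fact k)) sums exp z"
proof -
  have "(\<lambda>k. z^k /\<^sub>R fact k) sums exp z" by (rule exp_converges)
  moreover have "(\<lambda>k. z^k /\<^sub>R fact k) = (\<lambda>k. z^k / of_nat (fact k))"
    by (rule ext) (simp add: scaleR_conv_of_real divide_inverse mult.commute)
  ultimately show ?thesis by simp
qed

lemma mexp_row_eigen: assumes A: "A \<in> carrier_mat N N" and a: "a < N" and y: "y < N"
  and row: "\<And>y. y < N \<Longrightarrow> A $$ (a,y) = (if y = a then ev else 0)"
  shows "mexp A $$ (a,y) = (if y = a then exp ev else 0)"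
proof -
  have "mexp A $$ (a,y) = (\<Sum>k. (if y = a then ev^k else 0) / of_nat (fact k))"
    unfolding mexp_idx[OF A a y] using pow_row_eigen[OF A a row y] by simp
  also have "\<dots> = (if y = a then exp ev else 0)"
    using sums_unique[OF exp_series[of ev]] by auto
  finally show ?thesis .
qed

lemma pow_row_sector: assumes A: "A \<in> carrier_mat N N" and B: "B \<in> carrier_mat n n"
  and winj: "\<And>j k. j < n \<Longrightarrow> k < n \<Longrightarrow> w j = w k \<longleftrightarrow> j = k"
  and wl: "\<And>j. j < n \<Longrightarrow> w j < N"
  and row: "\<And>j y. j < n \<Longrightarrow> y < N \<Longrightarrow> A $$ (w j, y) = (\<Sum>k<n. if y = w k then B $$ (j,k) else 0)"
  shows "j < n \<Longrightarrow> y < N \<Longrightarrow> (A ^\<^sub>m K) $$ (w j, y) = (\<Sum>k<n. if y = w k then (B ^\<^sub>m K) $$ (j,k) else 0)"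
proof (induction K arbitrary: j y)
  case 0
  have "(\<Sum>k<n. if y = w k then (B ^\<^sub>m 0) $$ (j,k) else 0) = (\<Sum>k<n. if k = j then (if y = w j then 1 else 0) else 0)"
    using 0 B winj by (intro sum.cong) auto
  then show ?case using 0 A B wl by auto
next
  case (Suc K)
  have "(A ^\<^sub>m Suc K) $$ (w j, y) = (A ^\<^sub>m K * A) $$ (w j,y)" by simp
  also have "\<dots> = (\<Sum>z<N. (A ^\<^sub>m K) $$ (w j, z) * A $$ (z,y))"
    using A Suc wl by (intro mult_idx) auto
  also have "\<dots> = (\<Sum>z<N. \<Sum>k<n. if z = w k then (B ^\<^sub>m K) $$ (j,k) * A $$ (w k,y) else 0)"
    using Suc by (intro sum.cong) (auto simp: sum_distrib_right intro!: sum.cong)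
  also have "\<dots> = (\<Sum>k<n. \<Sum>z<N. if z = w k then (B ^\<^sub>m K) $$ (j,k) * A $$ (w k,y) else 0)"
    by (rule sum.swap)
  also have "\<dots> = (\<Sum>k<n. (B ^\<^sub>m K) $$ (j,k) * A $$ (w k,y))"
    using wl by (intro sum.cong) auto
  also have "\<dots> = (\<Sum>k<n. \<Sum>k'<n. if y = w k' then (B ^\<^sub>m K) $$ (j,k) * B $$ (k,k') else 0)"
    using Suc row by (intro sum.cong) (auto simp: sum_distrib_left intro!: sum.cong)
  also have "\<dots> = (\<Sum>k'<n. \<Sum>k<n. if y = w k' then (B ^\<^sub>m K) $$ (j,k) * B $$ (k,k') else 0)"
    by (rule sum.swap)
  also have "\<dots> = (\<Sum>k'<n. if y = w k' then (B ^\<^sub>m Suc K) $$ (j,k') else 0)"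
  proof (rule sum.cong)
    fix k' assume "k' \<in> {..<n}"
    then have "(B ^\<^sub>m Suc K) $$ (j,k') = (\<Sum>k<n. (B ^\<^sub>m K) $$ (j,k) * B $$ (k,k'))"
      using B Suc by (simp only: pow_mat.simps) (intro mult_idx, auto)
    then show "(\<Sum>k<n. if y = w k' then (B ^\<^sub>m K) $$ (j,k) * B $$ (k,k') else 0) = (if y = w k' then (B ^\<^sub>m Suc K) $$ (j,k') else 0)"
      by auto
  qed simp
  finally show ?case .
qed

lemma mexp_sector: assumes A: "A \<in> carrier_mat N N" and B: "B \<in> carrier_mat n n"
  and winj: "\<And>j k. j < n \<Longrightarrow> k < n \<Longrightarrow> w j = w k \<longleftrightarrow> j = k"
  and wl: "\<And>j. j < n \<Longrightarrow> w j < N"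
  and row: "\<And>j y. j < n \<Longrightarrow> y < N \<Longrightarrow> A $$ (w j, y) = (\<Sum>k<n. if y = w k then B $$ (j,k) else 0)"
  and j: "j < n" and k: "k < n"
  shows "mexp A $$ (w j, w k) = mexp B $$ (j,k)"
proof -
  have p: "(A ^\<^sub>m K) $$ (w j, w k) = (B ^\<^sub>m K) $$ (j,k)" for K
  proof -
    have "(A ^\<^sub>m K) $$ (w j, w k) = (\<Sum>k'<n. if w k = w k' then (B ^\<^sub>m K) $$ (j,k') else 0)"
      by (rule pow_row_sector[OF A B winj wl row j wl[OF k]])
    also have "\<dots> = (\<Sum>k'<n. if k' = k then (B ^\<^sub>m K) $$ (j,k) else 0)"
      using winj k by (intro sum.cong) auto
    finally show ?thesis using k by simp
  qed
  show ?thesis unfolding mexp_idx[OF A wl[OF j] wl[OF k]] mexp_idx[OF B j k] p ..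
qed

lemma pow_entry_bound: assumes A: "(A :: complex mat) \<in> carrier_mat n n"
  shows "j < n \<Longrightarrow> k < n \<Longrightarrow> norm ((A ^\<^sub>m K) $$ (j,k)) \<le> (\<Sum>a<n. \<Sum>b<n. norm (A $$ (a,b))) ^ K"
proof (induction K arbitrary: j k)
  case 0 then show ?case using A by auto
next
  case (Suc K)
  define R where "R = (\<Sum>a<n. \<Sum>b<n. norm (A $$ (a,b)))"
  have R0: "R \<ge> 0" unfolding R_def by (intro sum_nonneg) auto
  have col: "(\<Sum>l<n. norm (A $$ (l,k))) \<le> R"
    unfolding R_def using Suc.prems by (intro sum_mono member_le_sum) auto
  have "(A ^\<^sub>m Suc K) $$ (j,k) = (\<Sum>l<n. (A ^\<^sub>m K) $$ (j,l) * A $$ (l,k))"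
    using A Suc.prems by (simp only: pow_mat.simps) (intro mult_idx, auto)
  then have "norm ((A ^\<^sub>m Suc K) $$ (j,k)) \<le> (\<Sum>l<n. norm ((A ^\<^sub>m K) $$ (j,l)) * norm (A $$ (l,k)))"
    by (auto intro: order.trans[OF norm_sum] simp: norm_mult)
  also have "\<dots> \<le> (\<Sum>l<n. R ^ K * norm (A $$ (l,k)))"
    using Suc unfolding R_def by (intro sum_mono mult_right_mono) auto
  also have "\<dots> = R^K * (\<Sum>l<n. norm (A $$ (l,k)))" by (simp add: sum_distrib_left)
  also have "\<dots> \<le> R^K * R" using col R0 by (intro mult_left_mono) auto
  finally show ?case unfolding R_def by (simp add: mult.commute)
qed

lemma mexp_summable: assumes A: "(A :: complex mat) \<in> carrier_mat n n" and "j < n" "k < n"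
  shows "summable (\<lambda>K. norm ((A ^\<^sub>m K) $$ (j,k) / of_nat (fact K)))"
proof -
  define R where "R = (\<Sum>a<n. \<Sum>b<n. norm (A $$ (a,b)))"
  have sumR: "summable (\<lambda>K. inverse (fact K) * R ^ K)" by (rule summable_exp)
  have bnd: "norm (norm ((A ^\<^sub>m K) $$ (j,k) / of_nat (fact K))) \<le> inverse (fact K) * R ^ K" if "0 \<le> K" for K
  proof -
    have b1: "norm ((A ^\<^sub>m K) $$ (j,k)) \<le> R ^ K" unfolding R_def using pow_entry_bound[OF A assms(2,3)] .
    have b2: "norm ((A ^\<^sub>m K) $$ (j,k)) / fact K \<le> R ^ K / fact K"
      by (rule divide_right_mono[OF b1]) simp
    have b3: "norm ((A ^\<^sub>m K) $$ (j,k) / of_nat (fact K)) = norm ((A ^\<^sub>m K) $$ (j,k)) / fact K"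
      by (simp add: norm_divide)
    have b4: "R ^ K / fact K = inverse (fact K) * R ^ K" by (simp add: divide_inverse mult.commute)
    have b5: "\<bar>norm ((A ^\<^sub>m K) $$ (j,k)) / fact K\<bar> = norm ((A ^\<^sub>m K) $$ (j,k)) / fact K" by simp
    show ?thesis unfolding real_norm_def b3 b4[symmetric] b5 by (rule b2)
  qed
  show ?thesis by (rule summable_comparison_test'[OF sumR bnd])
qed

lemma sign_alg: "(x::complex) * x = 1 \<Longrightarrow> (p * x * a) * (x * q * b) = p * q * (a * b)"
proof -
  assume h: "x * x = 1"
  have "(p * x * a) * (x * q * b) = (x * x) * (p * q * (a * b))" by (simp add: mult_ac)
  then show ?thesis using h by simp
qed

lemma pow_sign: assumes B: "(B :: complex mat) \<in> carrier_mat n n" and C: "C \<in> carrier_mat n n"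
  and s: "\<And>j. j < n \<Longrightarrow> s j * s j = 1"
  and BC: "\<And>j k. j < n \<Longrightarrow> k < n \<Longrightarrow> B $$ (j,k) = s j * s k * C $$ (j,k)"
  shows "j < n \<Longrightarrow> k < n \<Longrightarrow> (B ^\<^sub>m K) $$ (j,k) = s j * s k * (C ^\<^sub>m K) $$ (j,k)"
proof (induction K arbitrary: j k)
  case 0 then show ?case using B C s by auto
next
  case (Suc K)
  have "(B ^\<^sub>m Suc K) $$ (j,k) = (\<Sum>l<n. (B ^\<^sub>m K) $$ (j,l) * B $$ (l,k))"
    using B Suc.prems by (simp only: pow_mat.simps) (intro mult_idx, auto)
  also have "\<dots> = (\<Sum>l<n. s j * s k * ((C ^\<^sub>m K) $$ (j,l) * C $$ (l,k)))"
  proof (rule sum.cong)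
    fix l assume "l \<in> {..<n}"
    then have l: "l < n" by simp
    have "(B ^\<^sub>m K) $$ (j,l) * B $$ (l,k) = (s j * s l * (C ^\<^sub>m K) $$ (j,l)) * (s l * s k * C $$ (l,k))"
      using Suc.IH[OF Suc.prems(1) l] BC[OF l Suc.prems(2)] by simp
    also have "\<dots> = s j * s k * ((C ^\<^sub>m K) $$ (j,l) * C $$ (l,k))"
      by (rule sign_alg[OF s[OF l]])
    finally show "(B ^\<^sub>m K) $$ (j,l) * B $$ (l,k) = s j * s k * ((C ^\<^sub>m K) $$ (j,l) * C $$ (l,k))" .
  qed simp
  also have "\<dots> = s j * s k * (\<Sum>l<n. (C ^\<^sub>m K) $$ (j,l) * C $$ (l,k))"
    by (simp only: sum_distrib_left)
  also have "(\<Sum>l<n. (C ^\<^sub>m K) $$ (j,l) * C $$ (l,k)) = (C ^\<^sub>m Suc K) $$ (j,k)"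
    using C Suc.prems by (simp only: pow_mat.simps) (intro mult_idx[symmetric], auto)
  finally show ?case .
qed

lemma mexp_sign: assumes B: "(B :: complex mat) \<in> carrier_mat n n" and C: "C \<in> carrier_mat n n"
  and s: "\<And>j. j < n \<Longrightarrow> s j * s j = 1"
  and BC: "\<And>j k. j < n \<Longrightarrow> k < n \<Longrightarrow> B $$ (j,k) = s j * s k * C $$ (j,k)"
  and j: "j < n" and k: "k < n"
  shows "mexp B $$ (j,k) = s j * s k * mexp C $$ (j,k)"
proof -
  have sm: "summable (\<lambda>K. (C ^\<^sub>m K) $$ (j,k) / of_nat (fact K))"
    by (rule summable_norm_cancel[OF mexp_summable[OF C j k]])
  have "mexp B $$ (j,k) = (\<Sum>K. s j * s k * ((C ^\<^sub>m K) $$ (j,k) / of_nat (fact K)))"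
    unfolding mexp_idx[OF B j k] by (intro suminf_cong) (simp add: pow_sign[OF B C s BC j k])
  also have "\<dots> = s j * s k * mexp C $$ (j,k)"
    unfolding mexp_idx[OF C j k] by (rule suminf_mult[OF sm])
  finally show ?thesis .
qed

lemma binom_step: fixes c :: complex and g :: "nat \<Rightarrow> complex"
  shows "(\<Sum>i\<le>K. of_nat (K choose i) * c^(K-i) * g (Suc i)) + c * (\<Sum>i\<le>K. of_nat (K choose i) * c^(K-i) * g i)
     = (\<Sum>i\<le>Suc K. of_nat (Suc K choose i) * c^(Suc K - i) * g i)"
proof -
  have r: "(\<Sum>i\<le>Suc K. of_nat (Suc K choose i) * c^(Suc K - i) * g i)
     = c^(Suc K) * g 0 + (\<Sum>i\<le>K. of_nat (K choose i) * c^(K-i) * g (Suc i)) + (\<Sum>i\<le>K. of_nat (K choose Suc i) * c^(K-i) * g (Suc i))"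
    unfolding sum.atMost_Suc_shift by (simp add: ring_distribs sum.distrib)
  have l0: "c * (\<Sum>i\<le>K. of_nat (K choose i) * c^(K-i) * g i) = (\<Sum>i\<le>K. of_nat (K choose i) * c^(Suc K-i) * g i)"
    unfolding sum_distrib_left by (rule sum.cong) (auto simp: Suc_diff_le mult_ac)
  have l1: "(\<Sum>i\<le>K. of_nat (K choose i) * c^(Suc K-i) * g i) = (\<Sum>i\<le>Suc K. of_nat (K choose i) * c^(Suc K-i) * g i)"
    by simp
  have l2: "(\<Sum>i\<le>Suc K. of_nat (K choose i) * c^(Suc K-i) * g i) = c^(Suc K) * g 0 + (\<Sum>i\<le>K. of_nat (K choose Suc i) * c^(K-i) * g (Suc i))"
    unfolding sum.atMost_Suc_shift by simp
  have l: "c * (\<Sum>i\<le>K. of_nat (K choose i) * c^(K-i) * g i) = c^(Suc K) * g 0 + (\<Sum>i\<le>K. of_nat (K choose Suc i) * c^(K-i) * g (Suc i))"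
    unfolding l0 l1 l2 ..
  show ?thesis unfolding r l by (simp add: algebra_simps)
qed

lemma pow_shift: assumes Y: "(Y :: complex mat) \<in> carrier_mat n n"
  shows "j < n \<Longrightarrow> k < n \<Longrightarrow> ((Y + c \<cdot>\<^sub>m 1\<^sub>m n) ^\<^sub>m K) $$ (j,k) = (\<Sum>i\<le>K. of_nat (K choose i) * c^(K-i) * (Y ^\<^sub>m i) $$ (j,k))"
proof (induction K arbitrary: j k)
  case 0 then show ?case using Y by simp
next
  case (Suc K)
  define Z where "Z = Y + c \<cdot>\<^sub>m 1\<^sub>m n"
  have Z: "Z \<in> carrier_mat n n" unfolding Z_def using Y by auto
  have Zi: "Z $$ (l,k) = Y $$ (l,k) + (if l = k then c else 0)" if "l < n" for l
    using Y that Suc.prems by (simp add: Z_def)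
  have s1: "(Z ^\<^sub>m Suc K) $$ (j,k) = (\<Sum>l<n. (Z ^\<^sub>m K) $$ (j,l) * Z $$ (l,k))"
    using Z Suc.prems by (simp only: pow_mat.simps) (intro mult_idx, auto)
  have s2: "(\<Sum>l<n. (Z ^\<^sub>m K) $$ (j,l) * Z $$ (l,k)) = (\<Sum>l<n. (Z ^\<^sub>m K) $$ (j,l) * Y $$ (l,k)) + (\<Sum>l<n. if l = k then c * (Z ^\<^sub>m K) $$ (j,l) else 0)"
    unfolding sum.distrib[symmetric] using Zi by (intro sum.cong) (auto simp: distrib_left mult.commute)
  have s3: "(\<Sum>l<n. if l = k then c * (Z ^\<^sub>m K) $$ (j,l) else 0) = c * (Z ^\<^sub>m K) $$ (j,k)"
    using Suc.prems by simp
  have s4: "(\<Sum>l<n. (Z ^\<^sub>m K) $$ (j,l) * Y $$ (l,k)) = (\<Sum>l<n. \<Sum>i\<le>K. of_nat (K choose i) * c^(K-i) * ((Y ^\<^sub>m i) $$ (j,l) * Y $$ (l,k)))"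
  proof (rule sum.cong)
    fix l assume "l \<in> {..<n}"
    then have "(Z ^\<^sub>m K) $$ (j,l) = (\<Sum>i\<le>K. of_nat (K choose i) * c^(K-i) * (Y ^\<^sub>m i) $$ (j,l))"
      unfolding Z_def using Suc.prems by (intro Suc.IH) auto
    then show "(Z ^\<^sub>m K) $$ (j,l) * Y $$ (l,k) = (\<Sum>i\<le>K. of_nat (K choose i) * c^(K-i) * ((Y ^\<^sub>m i) $$ (j,l) * Y $$ (l,k)))"
      by (simp only: sum_distrib_right mult.assoc)
  qed simp
  have s5: "(\<Sum>l<n. \<Sum>i\<le>K. of_nat (K choose i) * c^(K-i) * ((Y ^\<^sub>m i) $$ (j,l) * Y $$ (l,k))) = (\<Sum>i\<le>K. of_nat (K choose i) * c^(K-i) * (\<Sum>l<n. (Y ^\<^sub>m i) $$ (j,l) * Y $$ (l,k)))"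
    unfolding sum_distrib_left by (rule sum.swap)
  have s6: "(\<Sum>i\<le>K. of_nat (K choose i) * c^(K-i) * (\<Sum>l<n. (Y ^\<^sub>m i) $$ (j,l) * Y $$ (l,k))) = (\<Sum>i\<le>K. of_nat (K choose i) * c^(K-i) * (Y ^\<^sub>m Suc i) $$ (j,k))"
  proof (rule sum.cong)
    fix i
    have h: "(\<Sum>l<n. (Y ^\<^sub>m i) $$ (j,l) * Y $$ (l,k)) = (Y ^\<^sub>m Suc i) $$ (j,k)"
      using Y Suc.prems by (simp only: pow_mat.simps) (intro mult_idx[symmetric], auto)
    show "of_nat (K choose i) * c^(K-i) * (\<Sum>l<n. (Y ^\<^sub>m i) $$ (j,l) * Y $$ (l,k)) = of_nat (K choose i) * c^(K-i) * (Y ^\<^sub>m Suc i) $$ (j,k)"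
      by (simp only: h)
  qed simp
  have s7: "(Z ^\<^sub>m K) $$ (j,k) = (\<Sum>i\<le>K. of_nat (K choose i) * c^(K-i) * (Y ^\<^sub>m i) $$ (j,k))"
    unfolding Z_def by (rule Suc.IH[OF Suc.prems])
  have bs: "(\<Sum>i\<le>K. of_nat (K choose i) * c^(K-i) * (Y ^\<^sub>m Suc i) $$ (j,k)) + c * (\<Sum>i\<le>K. of_nat (K choose i) * c^(K-i) * (Y ^\<^sub>m i) $$ (j,k))
     = (\<Sum>i\<le>Suc K. of_nat (Suc K choose i) * c^(Suc K - i) * (Y ^\<^sub>m i) $$ (j,k))"
    by (rule binom_step)
  have fin: "(Z ^\<^sub>m Suc K) $$ (j,k) = (\<Sum>i\<le>Suc K. of_nat (Suc K choose i) * c^(Suc K - i) * (Y ^\<^sub>m i) $$ (j,k))"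
    unfolding s1 s2 s3 s4 s5 s6 s7 bs ..
  show ?case using fin unfolding Z_def .
qed

lemma div_lemma: "(C::complex) \<noteq> 0 \<Longrightarrow> C * c' * Y / (fi * fk * C) = Y / fi * (c' / fk)"
proof -
  assume "C \<noteq> 0"
  then have "C * c' * Y / (fi * fk * C) = (c' * Y) / (fi * fk)" by (simp add: mult.assoc mult.commute[of _ C])
  also have "\<dots> = Y / fi * (c' / fk)" by (simp add: mult.commute)
  finally show ?thesis .
qed

lemma mexp_shift: assumes Y: "(Y :: complex mat) \<in> carrier_mat n n" and j: "j < n" and k: "k < n"
  shows "mexp (Y + c \<cdot>\<^sub>m 1\<^sub>m n) $$ (j,k) = exp c * mexp Y $$ (j,k)"
proof -
  define a where "a = (\<lambda>i. (Y ^\<^sub>m i) $$ (j,k) / of_nat (fact i))"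
  define b where "b = (\<lambda>m. c^m / of_nat (fact m))"
  have Z: "Y + c \<cdot>\<^sub>m 1\<^sub>m n \<in> carrier_mat n n" using Y by auto
  have sa: "summable (\<lambda>i. norm (a i))" unfolding a_def by (rule mexp_summable[OF Y j k])
  have sb: "summable (\<lambda>i. norm (b i))"
  proof -
    have "summable (\<lambda>m. norm (c^m /\<^sub>R fact m))" by (rule summable_norm_exp)
    moreover have "(\<lambda>m. norm (c^m /\<^sub>R fact m)) = (\<lambda>m. norm (b m))"
      unfolding b_def by (rule ext) (simp add: scaleR_conv_of_real divide_inverse mult.commute)
    ultimately show ?thesis by simp
  qed
  have eb: "exp c = (\<Sum>m. b m)" unfolding b_def using sums_unique[OF exp_series[of c]] by simp
  have cp: "(\<Sum>m. a m) * (\<Sum>m. b m) = (\<Sum>K. \<Sum>i\<le>K. a i * b (K - i))"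
    by (rule Cauchy_product[OF sa sb])
  have cq: "(\<Sum>K. \<Sum>i\<le>K. a i * b (K - i)) = (\<Sum>K. ((Y + c \<cdot>\<^sub>m 1\<^sub>m n) ^\<^sub>m K) $$ (j,k) / of_nat (fact K))"
  proof (rule suminf_cong)
    fix K
    have "((Y + c \<cdot>\<^sub>m 1\<^sub>m n) ^\<^sub>m K) $$ (j,k) / of_nat (fact K)
       = (\<Sum>i\<le>K. of_nat (K choose i) * c^(K-i) * (Y ^\<^sub>m i) $$ (j,k) / of_nat (fact K))"
      unfolding pow_shift[OF Y j k] sum_divide_distrib ..
    also have "\<dots> = (\<Sum>i\<le>K. a i * b (K - i))"
    proof (rule sum.cong)
      fix i assume "i \<in> {..K}"
      then have iK: "i \<le> K" by simp
      have f: "(of_nat (fact i) * of_nat (fact (K - i)) * of_nat (K choose i) :: complex) = of_nat (fact K)"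
        by (simp only: of_nat_mult[symmetric] binomial_fact_lemma[OF iK])
      have nz: "(of_nat (fact i) :: complex) \<noteq> 0" "(of_nat (fact (K-i)) :: complex) \<noteq> 0" by auto
      show "of_nat (K choose i) * c^(K-i) * (Y ^\<^sub>m i) $$ (j,k) / of_nat (fact K) = a i * b (K - i)"
        unfolding a_def b_def f[symmetric] by (rule div_lemma) (use iK in simp)
    qed simp
    finally show "(\<Sum>i\<le>K. a i * b (K - i)) = ((Y + c \<cdot>\<^sub>m 1\<^sub>m n) ^\<^sub>m K) $$ (j,k) / of_nat (fact K)" by (rule sym)
  qed
  have mY: "mexp Y $$ (j,k) = (\<Sum>m. a m)" unfolding a_def by (rule mexp_idx[OF Y j k])
  have mZ: "mexp (Y + c \<cdot>\<^sub>m 1\<^sub>m n) $$ (j,k) = (\<Sum>K. ((Y + c \<cdot>\<^sub>m 1\<^sub>m n) ^\<^sub>m K) $$ (j,k) / of_nat (fact K))"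
    by (rule mexp_idx[OF Z j k])
  show ?thesis unfolding mZ mY eb cq[symmetric] cp[symmetric] by (simp add: mult.commute)
qed

lemma a_op_carrier: "1 \<le> j \<Longrightarrow> j \<le> n \<Longrightarrow> a_op n j \<in> carrier_mat (2^n) (2^n)"
proof -
  assume "1 \<le> j" "j \<le> n"
  then have "sx n j \<in> carrier_mat (2^n) (2^n)" "sy n j \<in> carrier_mat (2^n) (2^n)"
    using sx_carrier sy_carrier by auto
  then show ?thesis unfolding a_op_def carrier_mat_def by auto
qed

lemma a_op_idx: assumes "1 \<le> j" "j \<le> n" "x < 2^n" "y < 2^n"
  shows "a_op n j $$ (x,y) = (if bit x (n-j) \<and> y = flip_bit (n-j) x then 1 else 0)"
proof -
  have e: "a_op n j $$ (x,y) = (1/2) * (sx n j $$ (x,y) - \<i> * sy n j $$ (x,y))"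
    unfolding a_op_def using assms sx_carrier[OF assms(1,2)] sy_carrier[OF assms(1,2)] by simp
  show ?thesis unfolding e using assms by (simp add: sx_idx sy_idx)
qed

lemma adj_idx: assumes "A \<in> carrier_mat N N" "x < N" "y < N"
  shows "mat_adjoint A $$ (x,y) = cnj (A $$ (y,x))" "mat_adjoint A \<in> carrier_mat N N"
  using assms unfolding mat_adjoint_def by (auto simp: mat_of_rows_index)

lemma mult_idx_collapse_col: assumes "A \<in> carrier_mat N N" "B \<in> carrier_mat N N" "x < N" "y < N" "c < N"
  and "\<And>z. z < N \<Longrightarrow> B $$ (z,y) = (if z = c then \<beta> else 0)"
  shows "(A * B) $$ (x,y) = A $$ (x,c) * \<beta>"
proof -
  have "(A * B) $$ (x,y) = (\<Sum>z<N. A $$ (x,z) * B $$ (z,y))" by (rule mult_idx[OF assms(1-4)])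
  also have "\<dots> = (\<Sum>z<N. (if z = c then A $$ (x,c) * \<beta> else 0))"
    using assms(6) by (intro sum.cong) auto
  also have "\<dots> = A $$ (x,c) * \<beta>" using assms(5) by simp
  finally show ?thesis .
qed

lemma flip_vac: assumes "1 \<le> l" "l \<le> n" shows "flip_bit (n-l) (vac n) = wv n (l-1)"
  using assms by (intro bit_eqI) (auto simp: bit_flip_bit_iff bit_vac bit_wv)

lemma a_op_vac_row: assumes "1 \<le> l" "l \<le> n" "y < 2^n"
  shows "a_op n l $$ (vac n, y) = (if y = wv n (l-1) then 1 else 0)"
  using assms by (subst a_op_idx) (auto simp: vac_less bit_vac flip_vac)

lemma a_op_vac_col: assumes "1 \<le> l" "l \<le> n" "z < 2^n"
  shows "a_op n l $$ (z, vac n) = 0"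
proof -
  have "\<not> (bit z (n-l) \<and> vac n = flip_bit (n-l) z)"
  proof
    assume h: "bit z (n-l) \<and> vac n = flip_bit (n-l) z"
    have b1: "bit (vac n) (n-l)" using assms by (simp add: bit_vac)
    have b2: "\<not> bit (flip_bit (n-l) z) (n-l)" using h by (simp add: bit_flip_bit_iff)
    show False using b1 b2 h by metis
  qed
  then show ?thesis using assms by (subst a_op_idx) (auto simp: vac_less)
qed

lemma foldr_sz_vac: assumes "\<And>k. k \<in> set xs \<Longrightarrow> 1 \<le> k \<and> k \<le> n" "X \<in> carrier_mat (2^n) (2^n)"
  shows "foldr (\<lambda>k acc. sz n k * acc) xs X \<in> carrier_mat (2^n) (2^n) \<and>
    (\<forall>y<2^n. foldr (\<lambda>k acc. sz n k * acc) xs X $$ (vac n, y) = (-1)^length xs * X $$ (vac n, y))"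
  using assms(1)
proof (induction xs)
  case Nil then show ?case using assms(2) by simp
next
  case (Cons a xs)
  let ?R = "foldr (\<lambda>k acc. sz n k * acc) xs X"
  have IH: "?R \<in> carrier_mat (2^n) (2^n)" "\<And>y. y < 2^n \<Longrightarrow> ?R $$ (vac n, y) = (-1)^length xs * X $$ (vac n, y)"
    using Cons by auto
  have a: "1 \<le> a" "a \<le> n" using Cons.prems by auto
  have sa: "sz n a \<in> carrier_mat (2^n) (2^n)" using sz_carrier a by auto
  have "(sz n a * ?R) $$ (vac n, y) = (-1) * ?R $$ (vac n, y)" if "y < 2^n" for y
    by (rule mult_idx_collapse[OF sa IH(1) vac_less that vac_less]) (use a in \<open>simp add: sz_vac\<close>)
  then show ?case using sa IH by auto
qed

lemma c_op_vac: assumes "1 \<le> l" "l \<le> n"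
  shows "c_op n l \<in> carrier_mat (2^n) (2^n)"
    "y < 2^n \<Longrightarrow> c_op n l $$ (vac n, y) = (if y = wv n (l-1) then (-1)^(l-1) else 0)"
proof -
  have f: "foldr (\<lambda>k acc. sz n k * acc) [1..<l] (a_op n l) \<in> carrier_mat (2^n) (2^n) \<and>
    (\<forall>y<2^n. foldr (\<lambda>k acc. sz n k * acc) [1..<l] (a_op n l) $$ (vac n, y) = (-1)^length [1..<l] * a_op n l $$ (vac n, y))"
    using assms by (intro foldr_sz_vac a_op_carrier) auto
  then show "c_op n l \<in> carrier_mat (2^n) (2^n)" unfolding c_op_def by simp
  show "y < 2^n \<Longrightarrow> c_op n l $$ (vac n, y) = (if y = wv n (l-1) then (-1)^(l-1) else 0)"
    using f assms unfolding c_op_def by (auto simp: a_op_vac_row)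
qed

lemma vnorm_ge: assumes "i < dim_vec w" shows "cmod (w $ i) \<le> vnorm w"
proof -
  have "(cmod (w $ i))^2 \<le> (\<Sum>j<dim_vec w. (cmod (w $ j))^2)"
    using assms by (intro member_le_sum) auto
  then have "sqrt ((cmod (w $ i))^2) \<le> vnorm w" unfolding vnorm_def by (rule real_sqrt_le_mono)
  then show ?thesis by simp
qed

lemma sum_sq_le: assumes "finite A" "\<And>i. i \<in> A \<Longrightarrow> (f i :: real) \<ge> 0"
  shows "(\<Sum>i\<in>A. (f i)^2) \<le> (\<Sum>i\<in>A. f i)^2"
proof -
  have "(\<Sum>i\<in>A. (f i)^2) \<le> (\<Sum>i\<in>A. f i * (\<Sum>j\<in>A. f j))"
  proof (rule sum_mono)
    fix i assume i: "i \<in> A"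
    have "f i \<le> (\<Sum>j\<in>A. f j)" using assms i by (intro member_le_sum) auto
    then show "(f i)^2 \<le> f i * (\<Sum>j\<in>A. f j)" using assms(2)[OF i] by (simp add: power2_eq_square mult_left_mono)
  qed
  also have "\<dots> = (\<Sum>i\<in>A. f i)^2" by (simp add: sum_distrib_right power2_eq_square)
  finally show ?thesis .
qed

lemma vnorm_le_sum: "vnorm w \<le> (\<Sum>i<dim_vec w. cmod (w $ i))"
proof -
  have "vnorm w \<le> sqrt ((\<Sum>i<dim_vec w. cmod (w $ i))^2)"
    unfolding vnorm_def by (intro real_sqrt_le_mono sum_sq_le) auto
  also have "\<dots> = (\<Sum>i<dim_vec w. cmod (w $ i))" by (simp add: sum_nonneg)
  finally show ?thesis .
qed

lemma opnorm_ge_entry: assumes M: "M \<in> carrier_mat N N" and a: "a < N"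
  shows "cmod (M $$ (a,a)) \<le> opnorm M"
proof -
  define S where "S = {vnorm (M *\<^sub>v v) | v. v \<in> carrier_vec (dim_col M) \<and> vnorm v \<le> 1}"
  define e where "e = (unit_vec N a :: complex vec)"
  have ec: "e \<in> carrier_vec (dim_col M)" using M unfolding e_def by auto
  have ve: "vnorm e = 1"
  proof -
    have "(\<Sum>i<N. (cmod (e $ i))^2) = (\<Sum>i<N. if i = a then 1 else 0)"
      unfolding e_def using a by (intro sum.cong) auto
    then show ?thesis unfolding vnorm_def e_def using a by simp
  qed
  have Me: "(M *\<^sub>v e) $ a = M $$ (a,a)" using M a unfolding e_def by simp
  have mem: "vnorm (M *\<^sub>v e) \<in> S" unfolding S_def using ec ve by auto
  have bdd: "bdd_above S"
  proof (rule bdd_aboveI)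
    fix x assume "x \<in> S"
    then obtain v where v: "v \<in> carrier_vec (dim_col M)" "vnorm v \<le> 1" and x: "x = vnorm (M *\<^sub>v v)"
      unfolding S_def by auto
    have vi: "cmod (v $ j) \<le> 1" if "j < N" for j
      using vnorm_ge[of j v] v that M by auto
    have "x \<le> (\<Sum>i<N. cmod ((M *\<^sub>v v) $ i))" unfolding x using vnorm_le_sum[of "M *\<^sub>v v"] M by simp
    also have "\<dots> \<le> (\<Sum>i<N. \<Sum>j<N. cmod (M $$ (i,j)))"
    proof (rule sum_mono)
      fix i assume "i \<in> {..<N}"
      then have i: "i < N" by simp
      have "(M *\<^sub>v v) $ i = (\<Sum>j<N. M $$ (i,j) * v $ j)"
        using M v i by (auto simp: scalar_prod_def lessThan_atLeast0 intro!: sum.cong)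
      then have "cmod ((M *\<^sub>v v) $ i) \<le> (\<Sum>j<N. cmod (M $$ (i,j)) * cmod (v $ j))"
        by (auto intro: order.trans[OF norm_sum] simp: norm_mult)
      also have "\<dots> \<le> (\<Sum>j<N. cmod (M $$ (i,j)))"
        using vi by (intro sum_mono) (auto intro: mult_left_le)
      finally show "cmod ((M *\<^sub>v v) $ i) \<le> (\<Sum>j<N. cmod (M $$ (i,j)))" .
    qed
    finally show "x \<le> (\<Sum>i<N. \<Sum>j<N. cmod (M $$ (i,j)))" .
  qed
  have "cmod (M $$ (a,a)) \<le> vnorm (M *\<^sub>v e)" unfolding Me[symmetric] using M a by (intro vnorm_ge) auto
  also have "\<dots> \<le> Sup S" by (rule cSup_upper[OF mem bdd])
  finally show ?thesis unfolding opnorm_def S_def .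
qed

lemma E1_row: assumes y: "y < 2^n"
  shows "mexp ((\<i> * complex_of_real t) \<cdot>\<^sub>m H_XY lam \<omega> n) $$ (vac n, y)
     = (if y = vac n then exp ((\<i> * complex_of_real t) * (- Sv lam \<omega> n)) else 0)"
proof -
  have Ac: "(\<i> * complex_of_real t) \<cdot>\<^sub>m H_XY lam \<omega> n \<in> carrier_mat (2^n) (2^n)" using H_carrier by auto
  show ?thesis
  proof (rule mexp_row_eigen[OF Ac vac_less y])
    fix y :: nat assume "y < 2^n"
    then show "((\<i> * complex_of_real t) \<cdot>\<^sub>m H_XY lam \<omega> n) $$ (vac n, y) = (if y = vac n then (\<i> * complex_of_real t) * (- Sv lam \<omega> n) else 0)"
      using H_carrier[of lam \<omega> n] vac_less[of n] by (simp add: H_vac)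
  qed
qed

lemma E2_sector: assumes j: "j < n" and k: "k < n"
  shows "mexp ((- \<i> * complex_of_real t) \<cdot>\<^sub>m H_XY lam \<omega> n) $$ (wv n j, wv n k)
     = mexp ((- \<i> * complex_of_real t) \<cdot>\<^sub>m B0 lam \<omega> n) $$ (j, k)"
proof -
  let ?s = "- \<i> * complex_of_real t"
  have Ac: "?s \<cdot>\<^sub>m H_XY lam \<omega> n \<in> carrier_mat (2^n) (2^n)" using H_carrier by auto
  have Bc: "?s \<cdot>\<^sub>m B0 lam \<omega> n \<in> carrier_mat n n" unfolding B0_def by auto
  show ?thesis
  proof (rule mexp_sector[OF Ac Bc _ _ _ j k])
    show "\<And>j k. j < n \<Longrightarrow> k < n \<Longrightarrow> wv n j = wv n k \<longleftrightarrow> j = k" by (rule wv_eq_iff)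
    show "\<And>j. j < n \<Longrightarrow> wv n j < 2^n" by (rule wv_less)
    fix j y :: nat assume jy: "j < n" "y < 2^n"
    have "(?s \<cdot>\<^sub>m H_XY lam \<omega> n) $$ (wv n j, y) = ?s * H_XY lam \<omega> n $$ (wv n j, y)"
      using H_carrier[of lam \<omega> n] jy wv_less[of n j] by simp
    also have "\<dots> = (\<Sum>k<n. ?s * (if y = wv n k then B0 lam \<omega> n $$ (j,k) else 0))"
      unfolding H_wv[OF jy(2,1)] by (rule sum_distrib_left)
    also have "\<dots> = (\<Sum>k<n. if y = wv n k then (?s \<cdot>\<^sub>m B0 lam \<omega> n) $$ (j,k) else 0)"
      using jy by (intro sum.cong) (auto simp: B0_def)
    finally show "(?s \<cdot>\<^sub>m H_XY lam \<omega> n) $$ (wv n j, y) = (\<Sum>k<n. if y = wv n k then (?s \<cdot>\<^sub>m B0 lam \<omega> n) $$ (j,k) else 0)" .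
  qed
qed

lemma tau_entry: assumes l: "1 \<le> l" "l \<le> n" and y: "y < 2^n"
  shows "tau lam \<omega> n t (c_op n l) $$ (vac n, y) =
    exp ((\<i> * complex_of_real t) * (- Sv lam \<omega> n)) * (-1)^(l-1) *
    mexp ((- \<i> * complex_of_real t) \<cdot>\<^sub>m H_XY lam \<omega> n) $$ (wv n (l-1), y)"
proof -
  define E1 where "E1 = mexp ((\<i> * complex_of_real t) \<cdot>\<^sub>m H_XY lam \<omega> n)"
  define E2 where "E2 = mexp ((- \<i> * complex_of_real t) \<cdot>\<^sub>m H_XY lam \<omega> n)"
  define e1 where "e1 = exp ((\<i> * complex_of_real t) * (- Sv lam \<omega> n))"
  have E1c: "E1 \<in> carrier_mat (2^n) (2^n)" unfolding E1_def using H_carrier by (intro mexp_carrier) auto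
  have E2c: "E2 \<in> carrier_mat (2^n) (2^n)" unfolding E2_def using H_carrier by (intro mexp_carrier) auto
  have cc: "c_op n l \<in> carrier_mat (2^n) (2^n)" using c_op_vac l by auto
  have E1cc: "E1 * c_op n l \<in> carrier_mat (2^n) (2^n)" using E1c cc by auto
  have w: "wv n (l-1) < 2^n" by (rule wv_less)
  have r1: "(E1 * c_op n l) $$ (vac n, z) = (if z = wv n (l-1) then e1 * (-1)^(l-1) else 0)" if "z < 2^n" for z
  proof -
    have "(E1 * c_op n l) $$ (vac n, z) = e1 * c_op n l $$ (vac n, z)"
      by (rule mult_idx_collapse[OF E1c cc vac_less that vac_less]) (simp add: E1_def e1_def E1_row)
    then show ?thesis using c_op_vac(2)[OF l that] by simp
  qed
  have "(E1 * c_op n l * E2) $$ (vac n, y) = e1 * (-1)^(l-1) * E2 $$ (wv n (l-1), y)"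
    by (rule mult_idx_collapse[OF E1cc E2c vac_less y w]) (rule r1)
  then show ?thesis unfolding tau_def E1_def[symmetric] E2_def[symmetric] e1_def[symmetric] .
qed

lemma comm_entry: assumes l: "1 \<le> l" "l < n" and r: "l < r" "r \<le> n"
  shows "commutator (tau lam \<omega> n t (c_op n l)) (mat_adjoint (a_op n r)) $$ (vac n, vac n) =
    exp ((\<i> * complex_of_real t) * (- Sv lam \<omega> n)) * (-1)^(l-1) *
    mexp ((- \<i> * complex_of_real t) \<cdot>\<^sub>m B0 lam \<omega> n) $$ (l - 1, r - 1)"
    and "commutator (tau lam \<omega> n t (c_op n l)) (mat_adjoint (a_op n r)) \<in> carrier_mat (2^n) (2^n)"
proof -
  define T where "T = tau lam \<omega> n t (c_op n l)"
  define Ad where "Ad = mat_adjoint (a_op n r)"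
  have ac: "a_op n r \<in> carrier_mat (2^n) (2^n)" using r l by (intro a_op_carrier) auto
  have Adc: "Ad \<in> carrier_mat (2^n) (2^n)" unfolding Ad_def using adj_idx(2)[OF ac vac_less vac_less] by auto
  have cc: "c_op n l \<in> carrier_mat (2^n) (2^n)" using c_op_vac l by auto
  have E1c: "mexp ((\<i> * complex_of_real t) \<cdot>\<^sub>m H_XY lam \<omega> n) \<in> carrier_mat (2^n) (2^n)"
    using H_carrier by (intro mexp_carrier) auto
  have E2c: "mexp ((- \<i> * complex_of_real t) \<cdot>\<^sub>m H_XY lam \<omega> n) \<in> carrier_mat (2^n) (2^n)"
    using H_carrier by (intro mexp_carrier) auto
  have Tc: "T \<in> carrier_mat (2^n) (2^n)" unfolding T_def tau_def using E1c E2c cc by auto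
  have Ad1: "Ad $$ (z, vac n) = (if z = wv n (r-1) then 1 else 0)" if "z < 2^n" for z
    unfolding Ad_def using adj_idx(1)[OF ac that vac_less] a_op_vac_row[of r n z] r l that by simp
  have Ad2: "Ad $$ (vac n, z) = (if z = vac n then 0 else 0)" if "z < 2^n" for z
    unfolding Ad_def using adj_idx(1)[OF ac vac_less that] a_op_vac_col[of r n z] r l that by simp
  have p1: "(T * Ad) $$ (vac n, vac n) = T $$ (vac n, wv n (r-1)) * 1"
    by (rule mult_idx_collapse_col[OF Tc Adc vac_less vac_less wv_less]) (rule Ad1)
  have p2: "(Ad * T) $$ (vac n, vac n) = 0 * T $$ (vac n, vac n)"
    by (rule mult_idx_collapse[OF Adc Tc vac_less vac_less vac_less]) (rule Ad2)
  have "commutator T Ad $$ (vac n, vac n) = (T * Ad) $$ (vac n, vac n) - (Ad * T) $$ (vac n, vac n)"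
    unfolding commutator_def using Tc Adc vac_less[of n] by simp
  also have "\<dots> = T $$ (vac n, wv n (r-1))" unfolding p1 p2 by simp
  also have "\<dots> = exp ((\<i> * complex_of_real t) * (- Sv lam \<omega> n)) * (-1)^(l-1) *
    mexp ((- \<i> * complex_of_real t) \<cdot>\<^sub>m H_XY lam \<omega> n) $$ (wv n (l-1), wv n (r-1))"
    unfolding T_def using l r by (intro tau_entry wv_less) auto
  also have "\<dots> = exp ((\<i> * complex_of_real t) * (- Sv lam \<omega> n)) * (-1)^(l-1) *
    mexp ((- \<i> * complex_of_real t) \<cdot>\<^sub>m B0 lam \<omega> n) $$ (l - 1, r - 1)"
    using l r by (subst E2_sector) auto
  finally show "commutator (tau lam \<omega> n t (c_op n l)) (mat_adjoint (a_op n r)) $$ (vac n, vac n) =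
    exp ((\<i> * complex_of_real t) * (- Sv lam \<omega> n)) * (-1)^(l-1) *
    mexp ((- \<i> * complex_of_real t) \<cdot>\<^sub>m B0 lam \<omega> n) $$ (l - 1, r - 1)" unfolding T_def Ad_def .
  show "commutator (tau lam \<omega> n t (c_op n l)) (mat_adjoint (a_op n r)) \<in> carrier_mat (2^n) (2^n)"
    unfolding commutator_def T_def[symmetric] Ad_def[symmetric] using Tc Adc by auto
qed

lemma neg1_sq: "((-1::complex)^j) * (-1)^j = 1"
  by (simp add: power_mult_distrib[symmetric])

lemma Sv_real: "Sv lam \<omega> n = complex_of_real (\<Sum>m\<in>{1..<n+1}. fib_pot lam \<omega> m)"
  by (simp add: of_real_sum)

lemma norm_exp_imag: "norm (exp (\<i> * complex_of_real a)) = 1"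
  by (simp add: norm_exp_eq_Re)

lemma B_rel: assumes j: "j < n" and k: "k < n"
  shows "((- \<i> * complex_of_real t) \<cdot>\<^sub>m B0 lam \<omega> n) $$ (j,k) = (-1)^j * (-1)^k *
    ((- 2 * \<i> * complex_of_real t) \<cdot>\<^sub>m H_one lam \<omega> n + (\<i> * complex_of_real t * Sv lam \<omega> n) \<cdot>\<^sub>m 1\<^sub>m n) $$ (j,k)"
proof -
  have B: "((- \<i> * complex_of_real t) \<cdot>\<^sub>m B0 lam \<omega> n) $$ (j,k) = (- \<i> * complex_of_real t) *
     (if j = k then 2 * V lam \<omega> (Suc j) - Sv lam \<omega> n else if j = Suc k \<or> k = Suc j then -2 else 0)"
    using j k by (simp add: B0_def)
  have C: "((- 2 * \<i> * complex_of_real t) \<cdot>\<^sub>m H_one lam \<omega> n + (\<i> * complex_of_real t * Sv lam \<omega> n) \<cdot>\<^sub>m 1\<^sub>m n) $$ (j,k)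
     = (- 2 * \<i> * complex_of_real t) * (if j = k then V lam \<omega> (Suc j) else if j = Suc k \<or> k = Suc j then 1 else 0)
       + (\<i> * complex_of_real t * Sv lam \<omega> n) * (if j = k then 1 else 0)"
    using j k by (simp add: H_one_def)
  consider "j = k" | "j = Suc k" | "k = Suc j" | "j \<noteq> k" "j \<noteq> Suc k" "k \<noteq> Suc j" by blast
  then show ?thesis
  proof cases
    case 1
    then show ?thesis unfolding B C using neg1_sq[of k] by (simp add: algebra_simps)
  next
    case 2
    have "((-1::complex)^j) * (-1)^k = -1" using 2 neg1_sq[of k] by simp
    then show ?thesis unfolding B C using 2 by (simp add: algebra_simps)
  next
    case 3
    have "((-1::complex)^j) * (-1)^k = -1" using 3 neg1_sq[of j] by simp
    then show ?thesis unfolding B C using 3 by (simp add: algebra_simps)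
  next
    case 4
    then show ?thesis unfolding B C by simp
  qed
qed

lemma mexp_B_norm: assumes j: "j < n" and k: "k < n"
  shows "cmod (mexp ((- \<i> * complex_of_real t) \<cdot>\<^sub>m B0 lam \<omega> n) $$ (j,k))
       = cmod (mexp ((- 2 * \<i> * complex_of_real t) \<cdot>\<^sub>m H_one lam \<omega> n) $$ (j,k))"
proof -
  define Y where "Y = (- 2 * \<i> * complex_of_real t) \<cdot>\<^sub>m H_one lam \<omega> n"
  define cc where "cc = \<i> * complex_of_real t * Sv lam \<omega> n"
  have Yc: "Y \<in> carrier_mat n n" unfolding Y_def H_one_def by auto
  have Bc: "(- \<i> * complex_of_real t) \<cdot>\<^sub>m B0 lam \<omega> n \<in> carrier_mat n n" unfolding B0_def by auto
  have Cc: "Y + cc \<cdot>\<^sub>m 1\<^sub>m n \<in> carrier_mat n n" using Yc by auto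
  have "mexp ((- \<i> * complex_of_real t) \<cdot>\<^sub>m B0 lam \<omega> n) $$ (j,k) = (-1)^j * (-1)^k * mexp (Y + cc \<cdot>\<^sub>m 1\<^sub>m n) $$ (j,k)"
  proof (rule mexp_sign[OF Bc Cc _ _ j k])
    show "\<And>j. j < n \<Longrightarrow> (-1::complex)^j * (-1)^j = 1" by (rule neg1_sq)
    show "\<And>j k. j < n \<Longrightarrow> k < n \<Longrightarrow> ((- \<i> * complex_of_real t) \<cdot>\<^sub>m B0 lam \<omega> n) $$ (j,k) = (-1)^j * (-1)^k * (Y + cc \<cdot>\<^sub>m 1\<^sub>m n) $$ (j,k)"
      unfolding Y_def cc_def by (rule B_rel)
  qed
  also have "\<dots> = (-1)^j * (-1)^k * (exp cc * mexp Y $$ (j,k))"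
    using mexp_shift[OF Yc j k] by simp
  finally have e: "mexp ((- \<i> * complex_of_real t) \<cdot>\<^sub>m B0 lam \<omega> n) $$ (j,k) = (-1)^j * (-1)^k * (exp cc * mexp Y $$ (j,k))" .
  have ncc: "norm (exp cc) = 1"
  proof -
    have "cc = \<i> * complex_of_real (t * (\<Sum>m\<in>{1..<n+1}. fib_pot lam \<omega> m))"
      unfolding cc_def Sv_real by simp
    then show ?thesis using norm_exp_imag by simp
  qed
  show ?thesis unfolding e Y_def[symmetric] norm_mult ncc norm_power by simp
qed

theorem lemma4p1:
  fixes lam \<omega> t :: real and n l r :: nat
  assumes "lam > 0"
    and "n \<ge> 2"
    and "0 \<le> \<omega>" and "\<omega> < 1"
    and "1 \<le> l" and "l < n"
    and "l < r" and "r \<le> n"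
  shows "opnorm (commutator (tau lam \<omega> n t (c_op n l)) (mat_adjoint (a_op n r)))
           \<ge> cmod (mexp ((- 2 * \<i> * complex_of_real t) \<cdot>\<^sub>m H_one lam \<omega> n) $$ (l - 1, r - 1))"
proof -
  define C where "C = commutator (tau lam \<omega> n t (c_op n l)) (mat_adjoint (a_op n r))"
  have Cc: "C \<in> carrier_mat (2^n) (2^n)" unfolding C_def using assms by (intro comm_entry(2)) auto
  have Cv: "C $$ (vac n, vac n) = exp ((\<i> * complex_of_real t) * (- Sv lam \<omega> n)) * (-1)^(l-1) *
    mexp ((- \<i> * complex_of_real t) \<cdot>\<^sub>m B0 lam \<omega> n) $$ (l - 1, r - 1)"
    unfolding C_def using assms by (intro comm_entry(1)) auto
  have ne: "norm (exp ((\<i> * complex_of_real t) * (- Sv lam \<omega> n))) = 1"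
  proof -
    have "(\<i> * complex_of_real t) * (- Sv lam \<omega> n) = \<i> * complex_of_real (- (t * (\<Sum>m\<in>{1..<n+1}. fib_pot lam \<omega> m)))"
      unfolding Sv_real by simp
    then show ?thesis using norm_exp_imag by simp
  qed
  have "cmod (C $$ (vac n, vac n)) = cmod (mexp ((- 2 * \<i> * complex_of_real t) \<cdot>\<^sub>m H_one lam \<omega> n) $$ (l - 1, r - 1))"
  proof -
    have mB: "cmod (mexp ((- \<i> * complex_of_real t) \<cdot>\<^sub>m B0 lam \<omega> n) $$ (l - 1, r - 1))
       = cmod (mexp ((- 2 * \<i> * complex_of_real t) \<cdot>\<^sub>m H_one lam \<omega> n) $$ (l - 1, r - 1))"
      using assms by (intro mexp_B_norm) auto
    show ?thesis unfolding Cv norm_mult ne norm_power mB by simp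
  qed
  moreover have "cmod (C $$ (vac n, vac n)) \<le> opnorm C" by (rule opnorm_ge_entry[OF Cc vac_less])
  ultimately show ?thesis unfolding C_def by simp
qed

end
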